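(* Let $b,n\in\mathbb N$ with $b\ge 2$. Let $m$ be a natural number that is antipalindromic in base $b^n$, with base-$b^n$ expansion $(m)_{b^n}=u_k\dots u_1u_0$ (so $u_j\in\{0,\dots,b^n-1\}$ and $m=\sum_{j=0}^k u_j b^{nj}$), and assume $u_k\ge b^{n-1}$. Then $m$ is also antipalindromic in base $b$ if and only if, for every $j\in\{0,1,\dots,k\}$, the base-$b$ expansion of $u_j$ padded with leading zeros to length exactly $n$ (i.e., the string $v_{j,n-1}\dots v_{j,1}v_{j,0}$ with $v_{j,i}\in\{0,\dots,b-1\}$ and $u_j=\sum_{i=0}^{n-1}v_{j,i}b^i$) is a palindrome, i.e., $v_{j,i}=v_{j,n-1-i}$ for all $i\in\{0,\dots,n-1\}$.
   Context: For an integer $B\ge 2$, every natural number $x$ has a unique base-$B$ expansion $x=a_\ell B^\ell+\dots+a_1B+a_0$ with $a_0,\dots,a_\ell\in\{0,1,\dots,B-1\}$ and $a_\ell\neq 0$, written $(x)_B=a_\ell\dots a_1a_0$. The number $x$ is antipalindromic in base $B$ if $a_j=B-1-a_{\ell-j}$ for all $j\in\{0,1,\dots,\ell\}$. A string $w_{n-1}\dots w_0$ is a palindrome if $w_i=w_{n-1-i}$ for all $i$. *)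

theory Defs
  imports Main
begin

text \<open>Base-B digits of x, least significant first; the list has no trailing
  (i.e. leading) zero, so its last element is the nonzero leading digit.
  For x = 0 (or B < 2) the list is empty.\<close>
function digits :: "nat \<Rightarrow> nat \<Rightarrow> nat list" where
  "digits B x = (if B < 2 \<or> x = 0 then [] else x mod B # digits B (x div B))"
  by auto
termination by (relation "measure (\<lambda>(B, x). x)") auto

declare digits.simps[simp del]

definition antipalindromic :: "nat \<Rightarrow> nat \<Rightarrow> bool" where
  "antipalindromic B x \<longleftrightarrow> x > 0 \<and>
     (let ds = digits B x; l = length ds
      in \<forall>j<l. ds ! j = B - 1 - ds ! (l - 1 - j))"

definition padded_digits :: "nat \<Rightarrow> nat \<Rightarrow> nat \<Rightarrow> nat list" where
  "padded_digits B n x = map (\<lambda>i. x div B ^ i mod B) [0..<n]"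

definition palindrome :: "'a list \<Rightarrow> bool" where
  "palindrome w \<longleftrightarrow> (\<forall>i<length w. w ! i = w ! (length w - 1 - i))"

end

theory Submission
  imports Defs
begin

lemma digits_0: "digits B 0 = []"
  by (subst digits.simps) simp

lemma digits_cons: "B \<ge> 2 \<Longrightarrow> x \<noteq> 0 \<Longrightarrow> digits B x = x mod B # digits B (x div B)"
  by (subst digits.simps) simp

lemma digits_len_le: "B \<ge> 2 \<Longrightarrow> (x < B ^ L \<longleftrightarrow> length (digits B x) \<le> L)"
proof (induction L arbitrary: x)
  case 0 then show ?case
    by (cases "x = 0") (simp_all add: digits_0 digits_cons)
next
  case (Suc L)
  have A: "x < B ^ Suc L \<longleftrightarrow> x div B < B ^ L" using Suc.prems
    by (simp add: div_less_iff_less_mult mult.commute)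
  show ?case
  proof (cases "x = 0")
    case True then show ?thesis using Suc.prems by (simp add: digits_0)
  next
    case False
    have "length (digits B x) \<le> Suc L \<longleftrightarrow> length (digits B (x div B)) \<le> L"
      using digits_cons[OF Suc.prems False] by simp
    then show ?thesis using A Suc.IH[OF Suc.prems, of "x div B"] by blast
  qed
qed

lemma digits_nth: "B \<ge> 2 \<Longrightarrow> p < length (digits B x) \<Longrightarrow> digits B x ! p = x div B ^ p mod B"
proof (induction p arbitrary: x)
  case 0
  then have "x \<noteq> 0" by (metis digits_0 less_nat_zero_code list.size(3))
  then show ?case using digits_cons[OF 0(1)] by simp
next
  case (Suc p)
  then have "x \<noteq> 0" by (metis digits_0 less_nat_zero_code list.size(3))
  then have e: "digits B x = x mod B # digits B (x div B)" using digits_cons[OF Suc.prems(1)] by simp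
  have "p < length (digits B (x div B))" using Suc.prems(2) e by simp
  then have "digits B (x div B) ! p = x div B div B ^ p mod B" using Suc.IH[OF Suc.prems(1)] by blast
  then show ?case using e by (simp add: div_mult2_eq)
qed

lemma dm: "(r::nat) < B \<Longrightarrow> (B * q + r) div B = q \<and> (B * q + r) mod B = r"
  by simp

lemma compl_aux:
  assumes "(B::nat) > 0" "u < B * c"
  shows "(B * c - 1 - u) div B = c - 1 - u div B" "(B * c - 1 - u) mod B = B - 1 - u mod B"
proof -
  have c: "u div B < c" using assms by (simp add: div_less_iff_less_mult mult.commute)
  have u: "u = B * (u div B) + u mod B" by simp
  have m: "u mod B < B" using assms by simp
  have eq: "B * c - 1 - u = B * (c - 1 - u div B) + (B - 1 - u mod B)"
  proof -
    have "B * c = B * (c - 1 - u div B) + B * (u div B) + B"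
    proof -
      have "c = (c - 1 - u div B) + u div B + 1" using c by simp
      then have "B * c = B * ((c - 1 - u div B) + u div B + 1)" by simp
      then show ?thesis by (simp add: distrib_left)
    qed
    then show ?thesis using m u by linarith
  qed
  have r: "B - 1 - u mod B < B" using assms by simp
  show "(B * c - 1 - u) div B = c - 1 - u div B" "(B * c - 1 - u) mod B = B - 1 - u mod B"
    unfolding eq using dm[OF r] by blast+
qed

lemma compl_digit:
  assumes "(b::nat) \<ge> 2" "x < b ^ n" "i < n"
  shows "(b ^ n - 1 - x) div b ^ i mod b = b - 1 - x div b ^ i mod b"
proof -
  have bn: "b ^ n = b ^ i * b ^ (n - i)" using assms by (simp add: power_add[symmetric])
  have 1: "(b ^ n - 1 - x) div b ^ i = b ^ (n - i) - 1 - x div b ^ i"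
    using compl_aux(1)[of "b^i" x "b^(n-i)"] assms bn by simp
  have "n - i = Suc (n - i - 1)" using assms by simp
  then have bn2: "b ^ (n - i) = b * b ^ (n - i - 1)" by (metis power_Suc)
  have xl: "x div b ^ i < b ^ (n - i)" using assms bn
    by (simp add: div_less_iff_less_mult mult.commute)
  show ?thesis unfolding 1 using compl_aux(2)[of b "x div b^i" "b ^ (n - i - 1)"] assms bn2 xl by simp
qed

lemma digit_low:
  assumes "(b::nat) \<ge> 2" "i < n"
  shows "y div b ^ i mod b = (y mod b ^ n) div b ^ i mod b"
proof -
  have a: "z div b ^ i mod b = (z mod b ^ Suc i) div b ^ i" for z
  proof -
    have "z mod b ^ Suc i = b ^ i * (z div b ^ i mod b) + z mod b ^ i"
      using mod_mult2_eq[of z "b^i" b] by (metis mult.commute power_Suc)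
    moreover have "z mod b ^ i < b ^ i" using assms by simp
    ultimately show ?thesis using dm by metis
  qed
  have "b ^ Suc i dvd b ^ n" using assms by (metis Suc_leI le_imp_power_dvd)
  then have "(y mod b ^ n) mod b ^ Suc i = y mod b ^ Suc i" by (simp add: mod_mod_cancel)
  then show ?thesis using a by metis
qed

lemma sub_eq: "(a::nat) < b \<Longrightarrow> c < b \<Longrightarrow> (b - 1 - a = b - 1 - c) \<longleftrightarrow> a = c"
  by arith

lemma pal_iff: "palindrome (padded_digits b n x) \<longleftrightarrow> (\<forall>i<n. x div b ^ i mod b = x div b ^ (n - 1 - i) mod b)"
  unfolding palindrome_def padded_digits_def by auto

theorem mainTheorem17:
  fixes b n m k :: nat and u :: "nat \<Rightarrow> nat"
  assumes "b \<ge> 2" and "n \<ge> 1"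
    and "antipalindromic (b ^ n) m"
    and "length (digits (b ^ n) m) = Suc k"
    and "\<And>j. j \<le> k \<Longrightarrow> u j = digits (b ^ n) m ! j"
    and "u k \<ge> b ^ (n - 1)"
  shows "antipalindromic b m \<longleftrightarrow>
           (\<forall>j\<le>k. palindrome (padded_digits b n (u j)))"
proof -
  define N where "N = b ^ n"
  have b: "b \<ge> 2" using assms by simp
  have N2: "N \<ge> 2"
  proof -
    have "b ^ 1 \<le> b ^ n" using assms(1,2) by (intro power_increasing) auto
    then show ?thesis unfolding N_def using assms(1) by simp
  qed
  have lenN: "length (digits N m) = Suc k" using assms N_def by simp
  have mlt: "m < N ^ Suc k" using digits_len_le[OF N2, of m "Suc k"] lenN by simp
  have uj: "u j = m div N ^ j mod N" if "j \<le> k" for j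
    using assms(5)[OF that] digits_nth[OF N2, of j m] lenN that N_def by simp
  have ult: "u j < N" if "j \<le> k" for j using uj[OF that] N2 by simp
  have m0: "m > 0" using assms(3) unfolding antipalindromic_def by simp
  have apall: "\<forall>j<Suc k. digits N m ! j = N - 1 - digits N m ! (Suc k - 1 - j)"
  proof -
    have X: "\<forall>j<length (digits N m). digits N m ! j = N - 1 - digits N m ! (length (digits N m) - 1 - j)"
      using assms(3) unfolding antipalindromic_def Let_def N_def by blast
    from X[unfolded lenN] show ?thesis .
  qed
  have ap: "u j = N - 1 - u (k - j)" if "j \<le> k" for j
  proof -
    have "j < Suc k" using that by simp
    then have "digits N m ! j = N - 1 - digits N m ! (Suc k - 1 - j)" using apall by blast
    then have "digits N m ! j = N - 1 - digits N m ! (k - j)" by simp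
    moreover have "u j = digits N m ! j" using assms(5)[OF that] N_def by simp
    moreover have "u (k - j) = digits N m ! (k - j)" using assms(5)[of "k - j"] N_def by simp
    ultimately show ?thesis by simp
  qed
  have ukd: "m div N ^ k = u k"
  proof -
    have "m div N ^ k < N" using mlt N2 by (simp add: div_less_iff_less_mult mult.commute)
    then show ?thesis using uj[of k] by simp
  qed
  define L where "L = n * Suc k"
  have L1: "L \<ge> 1" using assms(2) L_def by simp
  have bL: "b ^ L = N ^ Suc k" unfolding L_def N_def by (simp only: power_mult)
  have mL: "m < b ^ L" using mlt bL by simp
  have mL2: "b ^ (L - 1) \<le> m"
  proof -
    have "b ^ (n - 1) \<le> m div N ^ k" using ukd assms(6) by simp
    then have "b ^ (n - 1) * N ^ k \<le> m" using N2 by (simp add: less_eq_div_iff_mult_less_eq)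
    moreover have "b ^ (n - 1) * N ^ k = b ^ (L - 1)"
    proof -
      have "L - 1 = (n - 1) + n * k" unfolding L_def using assms(2) by simp
      then show ?thesis unfolding N_def by (simp add: power_add power_mult)
    qed
    ultimately show ?thesis by simp
  qed
  have lenb: "length (digits b m) = L"
  proof -
    have "length (digits b m) \<le> L" using digits_len_le[OF b] mL by simp
    moreover have "\<not> length (digits b m) \<le> L - 1" using digits_len_le[OF b, of m "L - 1"] mL2 by simp
    ultimately show ?thesis by simp
  qed
  define d where "d p = m div b ^ p mod b" for p
  have apb: "antipalindromic b m \<longleftrightarrow> (\<forall>p<L. d p = b - 1 - d (L - 1 - p))"
    unfolding antipalindromic_def Let_def lenb using m0 digits_nth[OF b, of _ m] lenb d_def by auto
  define v where "v j i = u j div b ^ i mod b" for j i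
  have F1: "d (n * j + i) = v j i" if "j \<le> k" "i < n" for j i
  proof -
    have "d (n * j + i) = m div N ^ j div b ^ i mod b"
      unfolding d_def N_def by (simp add: power_add power_mult div_mult2_eq)
    also have "\<dots> = (m div N ^ j mod N) div b ^ i mod b"
      using digit_low[OF b that(2)] N_def by simp
    finally show ?thesis using uj[OF that(1)] v_def by simp
  qed
  have comp: "v j i = b - 1 - v (k - j) i" if "j \<le> k" "i < n" for j i
    unfolding v_def ap[OF that(1)] N_def using compl_digit[OF b _ that(2)] ult[of "k - j"] N_def by simp
  have vlt: "v j i < b" for j i using b v_def by simp
  have stepA: "(\<forall>p<L. d p = b - 1 - d (L - 1 - p)) \<longleftrightarrow>
     (\<forall>j\<le>k. \<forall>i<n. v j i = b - 1 - v (k - j) (n - 1 - i))"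
  proof
    assume H: "\<forall>p<L. d p = b - 1 - d (L - 1 - p)"
    show "\<forall>j\<le>k. \<forall>i<n. v j i = b - 1 - v (k - j) (n - 1 - i)"
    proof (intro allI impI)
      fix j i assume j: "j \<le> k" and i: "i < n"
      have e: "n * Suc k = n * (k - j) + n * j + n"
      proof -
        have "Suc k = (k - j) + j + 1" using j by simp
        then have "n * Suc k = n * ((k - j) + j + 1)" by simp
        then show ?thesis by (simp add: distrib_left)
      qed
      have p: "n * j + i < L" unfolding L_def using e i by linarith
      have q: "L - 1 - (n * j + i) = n * (k - j) + (n - 1 - i)" unfolding L_def using e i by linarith
      have kj: "k - j \<le> k" and ni: "n - 1 - i < n" using i by auto
      have "d (n * j + i) = b - 1 - d (L - 1 - (n * j + i))" using H p by blast
      then show "v j i = b - 1 - v (k - j) (n - 1 - i)"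
        unfolding q F1[OF j i] F1[OF kj ni] .
    qed
  next
    assume H: "\<forall>j\<le>k. \<forall>i<n. v j i = b - 1 - v (k - j) (n - 1 - i)"
    show "\<forall>p<L. d p = b - 1 - d (L - 1 - p)"
    proof (intro allI impI)
      fix p assume p: "p < L"
      define j where "j = p div n"
      define i where "i = p mod n"
      have pe: "p = n * j + i" unfolding j_def i_def by simp
      have i: "i < n" unfolding i_def using assms(2) by simp
      have j: "j \<le> k" unfolding j_def using p L_def assms(2)
        by (simp add: div_less_iff_less_mult less_Suc_eq_le[symmetric] mult.commute)
      have e: "n * Suc k = n * (k - j) + n * j + n"
      proof -
        have "Suc k = (k - j) + j + 1" using j by simp
        then have "n * Suc k = n * ((k - j) + j + 1)" by simp
        then show ?thesis by (simp add: distrib_left)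
      qed
      have q: "L - 1 - (n * j + i) = n * (k - j) + (n - 1 - i)" unfolding L_def using e i by linarith
      have kj: "k - j \<le> k" and ni: "n - 1 - i < n" using i by auto
      have "v j i = b - 1 - v (k - j) (n - 1 - i)" using H j i by blast
      then show "d p = b - 1 - d (L - 1 - p)"
        unfolding pe q F1[OF j i] F1[OF kj ni] .
    qed
  qed
  have stepB: "(\<forall>j\<le>k. \<forall>i<n. v j i = b - 1 - v (k - j) (n - 1 - i)) \<longleftrightarrow>
      (\<forall>j\<le>k. \<forall>i<n. v (k - j) i = v (k - j) (n - 1 - i))"
  proof -
    have "v j i = b - 1 - v (k - j) (n - 1 - i) \<longleftrightarrow> v (k - j) i = v (k - j) (n - 1 - i)"
      if "j \<le> k" "i < n" for j i
      using comp[OF that] sub_eq[OF vlt[of "k - j" i] vlt[of "k - j" "n - 1 - i"]] by simp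
    then show ?thesis by auto
  qed
  have stepC: "(\<forall>j\<le>k. \<forall>i<n. v (k - j) i = v (k - j) (n - 1 - i)) \<longleftrightarrow>
      (\<forall>j\<le>k. \<forall>i<n. v j i = v j (n - 1 - i))"
  proof
    assume H: "\<forall>j\<le>k. \<forall>i<n. v (k - j) i = v (k - j) (n - 1 - i)"
    show "\<forall>j\<le>k. \<forall>i<n. v j i = v j (n - 1 - i)"
    proof (intro allI impI)
      fix j i assume "j \<le> k" "i < n"
      moreover have "k - j \<le> k" by simp
      ultimately have "v (k - (k - j)) i = v (k - (k - j)) (n - 1 - i)" using H by blast
      then show "v j i = v j (n - 1 - i)" using \<open>j \<le> k\<close> by simp
    qed
  next
    assume H: "\<forall>j\<le>k. \<forall>i<n. v j i = v j (n - 1 - i)"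
    show "\<forall>j\<le>k. \<forall>i<n. v (k - j) i = v (k - j) (n - 1 - i)"
    proof (intro allI impI)
      fix j i assume "j \<le> k" "i < n"
      have "k - j \<le> k" by simp
      then show "v (k - j) i = v (k - j) (n - 1 - i)" using H \<open>i < n\<close> by blast
    qed
  qed
  have "antipalindromic b m \<longleftrightarrow> (\<forall>j\<le>k. \<forall>i<n. v j i = v j (n - 1 - i))"
    using apb stepA stepB stepC by blast
  then show ?thesis unfolding pal_iff v_def .
qed

end
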